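(* Let $(\mathfrak g,[\cdot,\cdot],\alpha,\varepsilon,B)$ be a quadratic multiplicative color Hom-Lie algebra, $\rho$ a faithful representation of $\mathfrak g$ on $(M,\beta)$ with $\alpha^2=\mathrm{id}$ and $\beta^2=\mathrm{id}$, and assume that $\tilde\rho$, $\tilde\rho(x)(f)=-\varepsilon(x,f)\,f\circ\rho(x)$, is a representation of $\mathfrak g$ on $(M^*,\tilde\beta)$, $\tilde\beta(f)=f\circ\beta$. Let $\mathscr D:M\otimes M^*\to\mathfrak g$ be the even linear map with $B(x,\mathscr D(m\otimes f))=\langle\rho(\alpha(x))(m),f\rangle$ for all $x\in\mathfrak g$, where $\langle n,f\rangle=\varepsilon(n,f)f(n)$. Define on $M\otimes M^*$ the bracket $[m\otimes f,m'\otimes f']=\rho(\mathscr D(m\otimes f))(m')\otimes\tilde\beta(f')+\varepsilon(m+f,m')\,\beta(m')\otimes\tilde\rho(\mathscr D(m\otimes f))(f')$ and $\tau=\beta\otimes\tilde\beta$. Then $(M\otimes M^*,[\cdot,\cdot],\tau,\varepsilon)$ is a color Hom-Leibniz algebra, i.e. for all homogeneous $u,v,w\in M\otimes M^*$: $[\tau(u),[v,w]]=[[u,v],\tau(w)]+\varepsilon(u,v)[\tau(v),[u,w]]$.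
   Context: $\mathbb K$ is a field of characteristic zero and $\Gamma$ an abelian group. A bicharacter is a map $\varepsilon:\Gamma\times\Gamma\to\mathbb K\setminus\{0\}$ with $\varepsilon(a,b)\varepsilon(b,a)=1$, $\varepsilon(a,b+c)=\varepsilon(a,b)\varepsilon(a,c)$, $\varepsilon(a+b,c)=\varepsilon(a,c)\varepsilon(b,c)$; for homogeneous elements $\varepsilon(x,y)=\varepsilon(\deg x,\deg y)$. A color Hom-Lie algebra $(\mathfrak g,[\cdot,\cdot],\alpha,\varepsilon)$: $\Gamma$-graded space, even bilinear bracket, even linear $\alpha$, with $[x,y]=-\varepsilon(x,y)[y,x]$ and $\varepsilon(z,x)[\alpha(x),[y,z]]+\varepsilon(x,y)[\alpha(y),[z,x]]+\varepsilon(y,z)[\alpha(z),[x,y]]=0$; multiplicative means $\alpha([x,y])=[\alpha(x),\alpha(y)]$; quadratic means equipped with a nondegenerate $\varepsilon$-symmetric invariant ($B([x,y],z)=B(x,[y,z])$) bilinear form $B$ with $B(\alpha(x),y)=B(x,\alpha(y))$. A representation of a multiplicative $\mathfrak g$ on $(M,\beta)$ is an even linear $\rho:\mathfrak g\to\mathfrak{gl}(M)$ with $\rho([x,y])\circ\beta=\rho(\alpha(x))\circ\rho(y)-\varepsilon(x,y)\rho(\alpha(y))\circ\rho(x)$ and $\beta\circ\rho(x)=\rho(\alpha(x))\circ\beta$; faithful means $\rho$ injective. $M^*$ is the graded dual; $M\otimes M^*$ is graded by total degree. *)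

theory Defs
  imports Complex_Main "HOL-Library.Function_Algebras"
begin

definition bichar :: "('c::ab_group_add \<Rightarrow> 'c \<Rightarrow> 'k::field) \<Rightarrow> bool" where
  "bichar eps \<longleftrightarrow> (\<forall>a b. eps a b \<noteq> 0) \<and> (\<forall>a b. eps a b * eps b a = 1) \<and>
     (\<forall>a b c. eps a (b + c) = eps a b * eps a c) \<and>
     (\<forall>a b c. eps (a + b) c = eps a c * eps b c)"

definition lin_on :: "('k \<Rightarrow> 'v::ab_group_add \<Rightarrow> 'v) \<Rightarrow> 'v set \<Rightarrow>
    ('k \<Rightarrow> 'w::ab_group_add \<Rightarrow> 'w) \<Rightarrow> 'w set \<Rightarrow> ('v \<Rightarrow> 'w) \<Rightarrow> bool" where
  "lin_on sV V sW W f \<longleftrightarrow> (\<forall>x\<in>V. f x \<in> W) \<and> (\<forall>x\<in>V. \<forall>y\<in>V. f (x + y) = f x + f y) \<and>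
     (\<forall>c. \<forall>x\<in>V. f (sV c x) = sW c (f x))"

definition graded_on :: "('k::field \<Rightarrow> 'v::ab_group_add \<Rightarrow> 'v) \<Rightarrow> 'v set \<Rightarrow> ('c \<Rightarrow> 'v set) \<Rightarrow> bool" where
  "graded_on s W V \<longleftrightarrow> vector_space s \<and> module.subspace s W \<and>
     (\<forall>a. module.subspace s (V a) \<and> V a \<subseteq> W) \<and>
     (\<forall>x\<in>W. \<exists>!h. finite {a. h a \<noteq> 0} \<and> (\<forall>a. h a \<in> V a) \<and> x = (\<Sum>a\<in>{a. h a \<noteq> 0}. h a))"

definition color_hom_lie :: "('k::field \<Rightarrow> 'g::ab_group_add \<Rightarrow> 'g) \<Rightarrow> ('c::ab_group_add \<Rightarrow> 'g set) \<Rightarrow>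
    ('g \<Rightarrow> 'g \<Rightarrow> 'g) \<Rightarrow> ('g \<Rightarrow> 'g) \<Rightarrow> ('c \<Rightarrow> 'c \<Rightarrow> 'k) \<Rightarrow> bool" where
  "color_hom_lie s G br al eps \<longleftrightarrow> graded_on s UNIV G \<and> bichar eps \<and>
     (\<forall>x. Vector_Spaces.linear s s (br x)) \<and> (\<forall>y. Vector_Spaces.linear s s (\<lambda>x. br x y)) \<and>
     (\<forall>a b. \<forall>x\<in>G a. \<forall>y\<in>G b. br x y \<in> G (a + b)) \<and>
     Vector_Spaces.linear s s al \<and> (\<forall>a. \<forall>x\<in>G a. al x \<in> G a) \<and>
     (\<forall>a b. \<forall>x\<in>G a. \<forall>y\<in>G b. br x y = - s (eps a b) (br y x)) \<and>
     (\<forall>a b c. \<forall>x\<in>G a. \<forall>y\<in>G b. \<forall>z\<in>G c.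
        s (eps c a) (br (al x) (br y z)) + s (eps a b) (br (al y) (br z x))
        + s (eps b c) (br (al z) (br x y)) = 0)"

definition multiplicative :: "('g \<Rightarrow> 'g \<Rightarrow> 'g) \<Rightarrow> ('g \<Rightarrow> 'g) \<Rightarrow> bool" where
  "multiplicative br al \<longleftrightarrow> (\<forall>x y. al (br x y) = br (al x) (al y))"

definition quadratic_form :: "('k::field \<Rightarrow> 'g::ab_group_add \<Rightarrow> 'g) \<Rightarrow> ('c \<Rightarrow> 'g set) \<Rightarrow>
    ('g \<Rightarrow> 'g \<Rightarrow> 'g) \<Rightarrow> ('g \<Rightarrow> 'g) \<Rightarrow> ('c \<Rightarrow> 'c \<Rightarrow> 'k) \<Rightarrow> ('g \<Rightarrow> 'g \<Rightarrow> 'k) \<Rightarrow> bool" where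
  "quadratic_form s G br al eps B \<longleftrightarrow>
     (\<forall>x. Vector_Spaces.linear s (*) (B x)) \<and> (\<forall>y. Vector_Spaces.linear s (*) (\<lambda>x. B x y)) \<and>
     (\<forall>x. (\<forall>y. B x y = 0) \<longrightarrow> x = 0) \<and>
     (\<forall>a b. \<forall>x\<in>G a. \<forall>y\<in>G b. B x y = eps a b * B y x) \<and>
     (\<forall>x y z. B (br x y) z = B x (br y z)) \<and>
     (\<forall>x y. B (al x) y = B x (al y))"

definition color_hom_rep :: "('k::field \<Rightarrow> 'g::ab_group_add \<Rightarrow> 'g) \<Rightarrow> ('c::ab_group_add \<Rightarrow> 'g set) \<Rightarrow>
    ('g \<Rightarrow> 'g \<Rightarrow> 'g) \<Rightarrow> ('g \<Rightarrow> 'g) \<Rightarrow> ('c \<Rightarrow> 'c \<Rightarrow> 'k) \<Rightarrow>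
    ('k \<Rightarrow> 'v::ab_group_add \<Rightarrow> 'v) \<Rightarrow> 'v set \<Rightarrow> ('c \<Rightarrow> 'v set) \<Rightarrow>
    ('g \<Rightarrow> 'v \<Rightarrow> 'v) \<Rightarrow> ('v \<Rightarrow> 'v) \<Rightarrow> bool" where
  "color_hom_rep s G br al eps sM Mc MV rho be \<longleftrightarrow>
     (\<forall>x. lin_on sM Mc sM Mc (rho x)) \<and>
     (\<forall>c x y. \<forall>m\<in>Mc. rho (s c x + y) m = sM c (rho x m) + rho y m) \<and>
     (\<forall>a b. \<forall>x\<in>G a. \<forall>m\<in>MV b. rho x m \<in> MV (a + b)) \<and>
     lin_on sM Mc sM Mc be \<and> (\<forall>a. \<forall>m\<in>MV a. be m \<in> MV a) \<and>
     (\<forall>a b. \<forall>x\<in>G a. \<forall>y\<in>G b. \<forall>m\<in>Mc.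
        rho (br x y) (be m) = rho (al x) (rho y m) - sM (eps a b) (rho (al y) (rho x m))) \<and>
     (\<forall>x. \<forall>m\<in>Mc. be (rho x m) = rho (al x) (be m))"

definition dscale :: "'k::field \<Rightarrow> ('m \<Rightarrow> 'k) \<Rightarrow> ('m \<Rightarrow> 'k)" where
  "dscale c f = (\<lambda>n. c * f n)"

definition dual_deg :: "('k::field \<Rightarrow> 'm::ab_group_add \<Rightarrow> 'm) \<Rightarrow> ('c::ab_group_add \<Rightarrow> 'm set) \<Rightarrow>
    'c \<Rightarrow> ('m \<Rightarrow> 'k) set" where
  "dual_deg sM MV d = {f. Vector_Spaces.linear sM (*) f \<and> (\<forall>a. a \<noteq> - d \<longrightarrow> (\<forall>n\<in>MV a. f n = 0))}"

definition gdual :: "('k::field \<Rightarrow> 'm::ab_group_add \<Rightarrow> 'm) \<Rightarrow> ('c::ab_group_add \<Rightarrow> 'm set) \<Rightarrow>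
    ('m \<Rightarrow> 'k) set" where
  "gdual sM MV = module.span dscale (\<Union>d. dual_deg sM MV d)"

definition is_tensor :: "('k::field \<Rightarrow> 'a::ab_group_add \<Rightarrow> 'a) \<Rightarrow> 'a set \<Rightarrow>
    ('k \<Rightarrow> 'b::ab_group_add \<Rightarrow> 'b) \<Rightarrow> 'b set \<Rightarrow>
    ('k \<Rightarrow> 't::ab_group_add \<Rightarrow> 't) \<Rightarrow> ('a \<Rightarrow> 'b \<Rightarrow> 't) \<Rightarrow> bool" where
  "is_tensor sA A sB Bc sT tens \<longleftrightarrow> vector_space sT \<and>
     (\<forall>b\<in>Bc. lin_on sA A sT UNIV (\<lambda>a. tens a b)) \<and> (\<forall>a\<in>A. lin_on sB Bc sT UNIV (tens a)) \<and>
     module.span sT {tens a b | a b. a \<in> A \<and> b \<in> Bc} = UNIV \<and>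
     (\<forall>h :: 'a \<Rightarrow> 'b \<Rightarrow> 'k.
        (\<forall>b\<in>Bc. lin_on sA A (*) UNIV (\<lambda>a. h a b)) \<and> (\<forall>a\<in>A. lin_on sB Bc (*) UNIV (h a)) \<longrightarrow>
        (\<exists>\<phi>. Vector_Spaces.linear sT (*) \<phi> \<and> (\<forall>a\<in>A. \<forall>b\<in>Bc. \<phi> (tens a b) = h a b)))"

definition tensor_deg :: "('k::field \<Rightarrow> 'm::ab_group_add \<Rightarrow> 'm) \<Rightarrow> ('c::ab_group_add \<Rightarrow> 'm set) \<Rightarrow>
    ('k \<Rightarrow> 't::ab_group_add \<Rightarrow> 't) \<Rightarrow> ('m \<Rightarrow> ('m \<Rightarrow> 'k) \<Rightarrow> 't) \<Rightarrow> 'c \<Rightarrow> 't set" where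
  "tensor_deg sM MV sT tens c = module.span sT
     {tens m f | m f a b. a + b = c \<and> m \<in> MV a \<and> f \<in> dual_deg sM MV b}"

end

theory Submission
  imports Defs
begin

lemma lin_add: "Vector_Spaces.linear s1 s2 f \<Longrightarrow> f (x + y) = f x + f y"
  by (simp add: Vector_Spaces.linear_iff)
lemma lin_scale: "Vector_Spaces.linear s1 s2 f \<Longrightarrow> f (s1 c x) = s2 c (f x)"
  by (simp add: Vector_Spaces.linear_iff)
lemma lin_diff: "Vector_Spaces.linear s1 s2 f \<Longrightarrow> f (x - y) = f x - f y"
  using lin_add[of s1 s2 f "x - y" y] by (simp add: algebra_simps)
lemma lin_zero: "Vector_Spaces.linear s1 s2 f \<Longrightarrow> f 0 = 0"
  using lin_add[of s1 s2 f 0 0] by simp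
lemma lin_sum: "Vector_Spaces.linear s1 s2 f \<Longrightarrow> f (sum g S) = (\<Sum>a\<in>S. f (g a))"
  by (induct S rule: infinite_finite_induct) (auto simp: lin_zero lin_add)

locale L =
  fixes s :: "'k::field_char_0 \<Rightarrow> 'g::ab_group_add \<Rightarrow> 'g"
    and G :: "'c::ab_group_add \<Rightarrow> 'g set"
    and br :: "'g \<Rightarrow> 'g \<Rightarrow> 'g" and al :: "'g \<Rightarrow> 'g"
    and eps :: "'c \<Rightarrow> 'c \<Rightarrow> 'k" and B :: "'g \<Rightarrow> 'g \<Rightarrow> 'k"
    and sM :: "'k \<Rightarrow> 'm::ab_group_add \<Rightarrow> 'm" and MV :: "'c \<Rightarrow> 'm set"
    and rho :: "'g \<Rightarrow> 'm \<Rightarrow> 'm" and be :: "'m \<Rightarrow> 'm"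
    and rhot :: "'g \<Rightarrow> ('m \<Rightarrow> 'k) \<Rightarrow> ('m \<Rightarrow> 'k)"
    and sT :: "'k \<Rightarrow> 't::ab_group_add \<Rightarrow> 't" and tens :: "'m \<Rightarrow> ('m \<Rightarrow> 'k) \<Rightarrow> 't"
    and D :: "'t \<Rightarrow> 'g" and brT :: "'t \<Rightarrow> 't \<Rightarrow> 't" and tau :: "'t \<Rightarrow> 't"
  assumes lie: "color_hom_lie s G br al eps"
    and mult: "multiplicative br al"
    and quad: "quadratic_form s G br al eps B"
    and Mgr: "graded_on sM UNIV MV"
    and rep: "color_hom_rep s G br al eps sM UNIV MV rho be"
    and faithful: "inj rho"
    and al_inv: "\<forall>x. al (al x) = x"
    and be_inv: "\<forall>m. be (be m) = m"
    and rhot_hom: "\<forall>a d. \<forall>x\<in>G a. \<forall>f\<in>dual_deg sM MV d.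
                     rhot x f = dscale (- eps a d) (f \<circ> rho x)"
    and rhot_lin: "\<forall>x. lin_on dscale (gdual sM MV) dscale (gdual sM MV) (rhot x)"
    and rhot_linx: "\<forall>c x y. \<forall>f\<in>gdual sM MV. rhot (s c x + y) f = dscale c (rhot x f) + rhot y f"
    and rhot_rep: "color_hom_rep s G br al eps dscale (gdual sM MV) (dual_deg sM MV) rhot (\<lambda>f. f \<circ> be)"
    and tensor: "is_tensor sM UNIV dscale (gdual sM MV) sT tens"
    and D_lin: "Vector_Spaces.linear sT s D"
    and D_even: "\<forall>c. \<forall>u\<in>tensor_deg sM MV sT tens c. D u \<in> G c"
    and D_def: "\<forall>a b d. \<forall>x\<in>G a. \<forall>m\<in>MV b. \<forall>f\<in>dual_deg sM MV d.
                  B x (D (tens m f)) = eps (a + b) d * f (rho (al x) m)"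
    and brT_lin1: "\<forall>v. Vector_Spaces.linear sT sT (\<lambda>u. brT u v)"
    and brT_lin2: "\<forall>u. Vector_Spaces.linear sT sT (brT u)"
    and brT_def: "\<forall>a b a' b'. \<forall>m\<in>MV a. \<forall>f\<in>dual_deg sM MV b. \<forall>m'\<in>MV a'. \<forall>f'\<in>dual_deg sM MV b'.
                   brT (tens m f) (tens m' f') =
                     tens (rho (D (tens m f)) m') (f' \<circ> be)
                     + sT (eps (a + b) a') (tens (be m') (rhot (D (tens m f)) f'))"
    and tau_lin: "Vector_Spaces.linear sT sT tau"
    and tau_def: "\<forall>m. \<forall>f\<in>gdual sM MV. tau (tens m f) = tens (be m) (f \<circ> be)"
begin

abbreviation "GD \<equiv> gdual sM MV"
abbreviation "DD \<equiv> dual_deg sM MV"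

lemma vs_s: "vector_space s" using lie unfolding color_hom_lie_def graded_on_def by blast
lemma vs_M: "vector_space sM" using Mgr unfolding graded_on_def by blast
lemma vs_T: "vector_space sT" using tensor unfolding is_tensor_def by blast
lemma mod_d: "module dscale"
  by unfold_locales (auto simp: dscale_def algebra_simps)

interpretation S: vector_space s by (rule vs_s)
interpretation M: vector_space sM by (rule vs_M)
interpretation T: vector_space sT by (rule vs_T)
interpretation F: module dscale by (rule mod_d)

lemma bich: "bichar eps" using lie unfolding color_hom_lie_def by blast
lemma eps_add1: "eps (a+b) c = eps a c * eps b c" using bich unfolding bichar_def by blast
lemma eps_add2: "eps a (b+c) = eps a b * eps a c" using bich unfolding bichar_def by blast
lemma eps_inv: "eps a b * eps b a = 1" using bich unfolding bichar_def by blast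

lemma G_sub: "S.subspace (G a)" using lie unfolding color_hom_lie_def graded_on_def by blast
lemma G_add: "x \<in> G a \<Longrightarrow> y \<in> G a \<Longrightarrow> x + y \<in> G a" using G_sub S.subspace_add by blast
lemma G_scale: "x \<in> G a \<Longrightarrow> s c x \<in> G a" using G_sub S.subspace_scale by blast
lemma G_diff: "x \<in> G a \<Longrightarrow> y \<in> G a \<Longrightarrow> x - y \<in> G a" using G_sub S.subspace_diff by blast
lemma br_deg: "x \<in> G a \<Longrightarrow> y \<in> G b \<Longrightarrow> br x y \<in> G (a+b)"
  using lie unfolding color_hom_lie_def by blast
lemma al_deg: "x \<in> G a \<Longrightarrow> al x \<in> G a"
  using lie unfolding color_hom_lie_def by blast
lemma al_br: "al (br x y) = br (al x) (al y)" using mult unfolding multiplicative_def by blast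

lemma B_lin2: "Vector_Spaces.linear s (*) (B x)" using quad unfolding quadratic_form_def by blast
lemma B_lin1: "Vector_Spaces.linear s (*) (\<lambda>x. B x y)" using quad unfolding quadratic_form_def by blast
lemma B_nd: "(\<forall>y. B x y = 0) \<Longrightarrow> x = 0" using quad unfolding quadratic_form_def by blast
lemma B_sym: "x \<in> G a \<Longrightarrow> y \<in> G b \<Longrightarrow> B x y = eps a b * B y x"
  using quad unfolding quadratic_form_def by blast
lemma B_inv: "B (br x y) z = B x (br y z)" using quad unfolding quadratic_form_def by blast
lemma B_al: "B (al x) y = B x (al y)" using quad unfolding quadratic_form_def by blast

lemma B_add2: "B x (y + z) = B x y + B x z" using B_lin2 by (rule lin_add)
lemma B_scale2: "B x (s c y) = c * B x y" using B_lin2 by (rule lin_scale)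
lemma B_diff2: "B x (y - z) = B x y - B x z" using B_lin2 by (rule lin_diff)

lemma G_graded: "\<exists>h. finite {a. h a \<noteq> 0} \<and> (\<forall>a. h a \<in> G a) \<and> y = (\<Sum>a\<in>{a. h a \<noteq> 0}. h a)"
proof -
  have "\<forall>x\<in>UNIV. \<exists>!h. finite {a. h a \<noteq> 0} \<and> (\<forall>a. h a \<in> G a) \<and> x = (\<Sum>a\<in>{a. h a \<noteq> 0}. h a)"
    using lie unfolding color_hom_lie_def graded_on_def by (elim conjE) assumption
  thus ?thesis by (meson UNIV_I ex1_implies_ex)
qed

lemma nondeg:
  assumes z: "z \<in> G e" and h: "\<And>r y. y \<in> G r \<Longrightarrow> B y z = 0"
  shows "z = 0"
proof (rule B_nd, intro allI)
  fix y
  obtain hh where hh: "finite {a. hh a \<noteq> 0}" "\<forall>a. hh a \<in> G a" "y = (\<Sum>a\<in>{a. hh a \<noteq> 0}. hh a)"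
    using G_graded by blast
  have "B z y = (\<Sum>a\<in>{a. hh a \<noteq> 0}. B z (hh a))"
    using lin_sum[OF B_lin2, of z hh] hh(3) by simp
  also have "\<dots> = 0"
    using hh(2) B_sym[OF z] h by (intro sum.neutral) auto
  finally show "B z y = 0" .
qed

lemma nd_eq:
  assumes "z \<in> G e" "z' \<in> G e" and h: "\<And>r y. y \<in> G r \<Longrightarrow> B y z = B y z'"
  shows "z = z'"
proof -
  have "z - z' = 0"
    by (rule nondeg[OF G_diff[OF assms(1,2)]]) (simp add: B_diff2 h)
  thus ?thesis by simp
qed

lemma rho_add: "rho x (m + n) = rho x m + rho x n"
  using rep unfolding color_hom_rep_def lin_on_def by simp
lemma rho_scale: "rho x (sM c m) = sM c (rho x m)"
  using rep unfolding color_hom_rep_def lin_on_def by simp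
lemma rho_linx: "rho (s c x + y) m = sM c (rho x m) + rho y m"
  using rep unfolding color_hom_rep_def by blast
lemma rho_deg: "x \<in> G a \<Longrightarrow> m \<in> MV b \<Longrightarrow> rho x m \<in> MV (a + b)"
  using rep unfolding color_hom_rep_def by blast
lemma be_deg: "m \<in> MV a \<Longrightarrow> be m \<in> MV a"
  using rep unfolding color_hom_rep_def by blast
lemma rep_id: "x \<in> G a \<Longrightarrow> y \<in> G b \<Longrightarrow>
   rho (br x y) (be m) = rho (al x) (rho y m) - sM (eps a b) (rho (al y) (rho x m))"
  using rep unfolding color_hom_rep_def by blast
lemma be_rho: "be (rho x m) = rho (al x) (be m)"
  using rep unfolding color_hom_rep_def by blast

lemma dd_lin: "f \<in> DD d \<Longrightarrow> Vector_Spaces.linear sM (*) f"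
  unfolding dual_deg_def by blast
lemma f_diff: "f \<in> DD d \<Longrightarrow> f (m - n) = f m - f n"
  using dd_lin lin_diff by blast
lemma f_scale: "f \<in> DD d \<Longrightarrow> f (sM c m) = c * f m"
  using dd_lin lin_scale by blast
lemma dd_GD: "f \<in> DD d \<Longrightarrow> f \<in> GD"
  unfolding gdual_def by (rule F.span_base) blast
lemma GD_add: "f \<in> GD \<Longrightarrow> g \<in> GD \<Longrightarrow> f + g \<in> GD"
  unfolding gdual_def by (rule F.span_add)
lemma GD_scale: "f \<in> GD \<Longrightarrow> dscale c f \<in> GD"
  unfolding gdual_def by (rule F.span_scale)

lemma rhot_GD: "f \<in> GD \<Longrightarrow> rhot x f \<in> GD"
  using rhot_lin unfolding lin_on_def by blast
lemma rhot_linx': "f \<in> GD \<Longrightarrow> rhot (s c x + y) f = dscale c (rhot x f) + rhot y f"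
  using rhot_linx by blast
lemma rhot_deg: "x \<in> G a \<Longrightarrow> f \<in> DD b \<Longrightarrow> rhot x f \<in> DD (a + b)"
  using rhot_rep unfolding color_hom_rep_def by blast
lemma bed_deg: "f \<in> DD a \<Longrightarrow> f \<circ> be \<in> DD a"
  using rhot_rep unfolding color_hom_rep_def by blast
lemma rhot_rep_id: "x \<in> G a \<Longrightarrow> y \<in> G b \<Longrightarrow> f \<in> GD \<Longrightarrow>
   rhot (br x y) (f \<circ> be) = rhot (al x) (rhot y f) - dscale (eps a b) (rhot (al y) (rhot x f))"
  using rhot_rep unfolding color_hom_rep_def by blast
lemma rhot_be: "f \<in> GD \<Longrightarrow> rhot x f \<circ> be = rhot (al x) (f \<circ> be)"
  using rhot_rep unfolding color_hom_rep_def by blast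
lemma bebe: "f \<circ> be \<circ> be = f"
  using be_inv by (auto simp: fun_eq_iff)

lemma tens_add1: "f \<in> GD \<Longrightarrow> tens (m + n) f = tens m f + tens n f"
  using tensor unfolding is_tensor_def lin_on_def by blast
lemma tens_scale1: "f \<in> GD \<Longrightarrow> tens (sM c m) f = sT c (tens m f)"
  using tensor unfolding is_tensor_def lin_on_def by blast
lemma tens_diff1: "f \<in> GD \<Longrightarrow> tens (m - n) f = tens m f - tens n f"
  using tens_add1[of f "m - n" n] by (simp add: algebra_simps)
lemma tens_add2: "f \<in> GD \<Longrightarrow> g \<in> GD \<Longrightarrow> tens m (f + g) = tens m f + tens m g"
  using tensor unfolding is_tensor_def lin_on_def by blast
lemma tens_scale2: "f \<in> GD \<Longrightarrow> tens m (dscale c f) = sT c (tens m f)"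
  using tensor unfolding is_tensor_def lin_on_def by blast
lemma tens_diff2: "f \<in> GD \<Longrightarrow> g \<in> GD \<Longrightarrow> tens m (f - dscale c g) = tens m f - sT c (tens m g)"
proof -
  assume f: "f \<in> GD" and g: "g \<in> GD"
  have eq: "f - dscale c g = f + dscale (- c) g" by (auto simp: fun_eq_iff dscale_def)
  have "tens m (f - dscale c g) = tens m f + sT (-c) (tens m g)"
    unfolding eq by (simp only: tens_add2[OF f GD_scale[OF g]] tens_scale2[OF g])
  thus ?thesis by (simp add: T.scale_minus_left)
qed

lemma D_add: "D (u + v) = D u + D v" using D_lin by (rule lin_add)
lemma D_scale: "D (sT c u) = s c (D u)" using D_lin by (rule lin_scale)

lemma gen_TD: "m \<in> MV a \<Longrightarrow> f \<in> DD b \<Longrightarrow> tens m f \<in> tensor_deg sM MV sT tens (a + b)"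
  unfolding tensor_deg_def by (rule T.span_base) blast
lemma D_deg: "m \<in> MV a \<Longrightarrow> f \<in> DD b \<Longrightarrow> D (tens m f) \<in> G (a + b)"
  using D_even gen_TD by blast

lemma brT_pure: "m \<in> MV a \<Longrightarrow> f \<in> DD b \<Longrightarrow> m' \<in> MV a' \<Longrightarrow> f' \<in> DD b' \<Longrightarrow>
   brT (tens m f) (tens m' f') =
     tens (rho (D (tens m f)) m') (f' \<circ> be) + sT (eps (a + b) a') (tens (be m') (rhot (D (tens m f)) f'))"
  using brT_def by blast

lemma brT_add1: "brT (x + y) z = brT x z + brT y z" using lin_add[OF spec[OF brT_lin1, of z]] by simp
lemma brT_scale1: "brT (sT c x) z = sT c (brT x z)" using lin_scale[OF spec[OF brT_lin1, of z]] by simp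
lemma brT_add2: "brT z (x + y) = brT z x + brT z y" using lin_add[OF spec[OF brT_lin2, of z]] by simp
lemma brT_scale2: "brT z (sT c x) = sT c (brT z x)" using lin_scale[OF spec[OF brT_lin2, of z]] by simp
lemma brT_zero1: "brT 0 z = 0" using lin_zero[OF spec[OF brT_lin1, of z]] by simp
lemma brT_zero2: "brT z 0 = 0" using lin_zero[OF spec[OF brT_lin2, of z]] by simp
lemma tau_add: "tau (x + y) = tau x + tau y" using lin_add[OF tau_lin] .
lemma tau_scale: "tau (sT c x) = sT c (tau x)" using lin_scale[OF tau_lin] .
lemma tau_zero: "tau 0 = 0" using lin_zero[OF tau_lin] .
lemma tau_pure: "f \<in> DD d \<Longrightarrow> tau (tens m f) = tens (be m) (f \<circ> be)"
  using tau_def dd_GD by blast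


lemma Ddef: "x \<in> G a \<Longrightarrow> m \<in> MV b \<Longrightarrow> f \<in> DD d \<Longrightarrow>
   B x (D (tens m f)) = eps (a + b) d * f (rho (al x) m)"
  using D_def by blast

lemma Dtau:
  assumes m: "m \<in> MV q" and f: "f \<in> DD d"
  shows "D (tens (be m) (f \<circ> be)) = al (D (tens m f))"
proof (rule nd_eq)
  show "D (tens (be m) (f \<circ> be)) \<in> G (q + d)" using D_deg[OF be_deg[OF m] bed_deg[OF f]] .
  show "al (D (tens m f)) \<in> G (q + d)" using al_deg[OF D_deg[OF m f]] .
  fix r y assume y: "y \<in> G r"
  have "B y (D (tens (be m) (f \<circ> be))) = eps (r + q) d * f (be (rho (al y) (be m)))"
    using Ddef[OF y be_deg[OF m] bed_deg[OF f]] by simp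
  also have "\<dots> = eps (r + q) d * f (rho y m)" using al_inv be_inv by (simp add: be_rho)
  also have "\<dots> = B (al y) (D (tens m f))"
    using Ddef[OF al_deg[OF y] m f] al_inv by simp
  also have "\<dots> = B y (al (D (tens m f)))" by (rule B_al)
  finally show "B y (D (tens (be m) (f \<circ> be))) = B y (al (D (tens m f)))" .
qed

lemma eps_id1: "eps p q * (eps (r + q) (p + d) * eps p d) = eps (r + p + q) d * eps r p"
proof -
  have "eps p q * (eps (r + q) (p + d) * eps p d) = (eps p q * eps q p) * (eps r p * eps r d * eps q d * eps p d)"
    by (simp add: eps_add1 eps_add2 ac_simps)
  also have "\<dots> = eps (r + p + q) d * eps r p" by (simp add: eps_inv eps_add1 ac_simps)
  finally show ?thesis .
qed

lemma Dsig:
  assumes x: "x \<in> G p" and m: "m \<in> MV q" and f: "f \<in> DD d"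
  shows "D (tens (rho x m) (f \<circ> be) + sT (eps p q) (tens (be m) (rhot x f))) = br x (D (tens m f))"
proof (rule nd_eq)
  have e1: "q + (p + d) = p + q + d" "p + (q + d) = p + q + d" by (simp_all add: ac_simps)
  have "D (tens (rho x m) (f \<circ> be)) \<in> G (p + q + d)"
    using D_deg[OF rho_deg[OF x m] bed_deg[OF f]] .
  moreover have "D (tens (be m) (rhot x f)) \<in> G (p + q + d)"
    using D_deg[OF be_deg[OF m] rhot_deg[OF x f]] e1 by simp
  ultimately show "D (tens (rho x m) (f \<circ> be) + sT (eps p q) (tens (be m) (rhot x f))) \<in> G (p + q + d)"
    by (simp add: D_add D_scale G_add G_scale)
  show "br x (D (tens m f)) \<in> G (p + q + d)" using br_deg[OF x D_deg[OF m f]] e1 by simp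
  fix r y assume y: "y \<in> G r"
  define F1 where "F1 = f (rho y (rho (al x) (be m)))"
  define F2 where "F2 = f (rho x (rho (al y) (be m)))"
  have "B y (D (tens (rho x m) (f \<circ> be))) = eps (r + (p + q)) d * f (be (rho (al y) (rho x m)))"
    using Ddef[OF y rho_deg[OF x m] bed_deg[OF f]] by simp
  also have "\<dots> = eps (r + p + q) d * F1" using al_inv unfolding F1_def by (simp add: be_rho ac_simps)
  finally have h1: "B y (D (tens (rho x m) (f \<circ> be))) = eps (r + p + q) d * F1" .
  have "B y (D (tens (be m) (rhot x f))) = eps (r + q) (p + d) * rhot x f (rho (al y) (be m))"
    using Ddef[OF y be_deg[OF m] rhot_deg[OF x f]] by simp
  also have "\<dots> = eps (r + q) (p + d) * (- eps p d * F2)"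
    using rhot_hom x f unfolding F2_def by (simp add: dscale_def)
  finally have h2: "B y (D (tens (be m) (rhot x f))) = eps (r + q) (p + d) * (- eps p d * F2)" .
  have "B y (br x (D (tens m f))) = B (br y x) (D (tens m f))" by (simp add: B_inv)
  also have "\<dots> = eps (r + p + q) d * f (rho (br (al y) (al x)) (be (be m)))"
    using Ddef[OF br_deg[OF y x] m f] be_inv by (simp add: al_br)
  also have "\<dots> = eps (r + p + q) d * (F1 - eps r p * F2)"
    using rep_id[OF al_deg[OF y] al_deg[OF x], of "be m"] al_inv unfolding F1_def F2_def
    by (simp add: f_diff[OF f] f_scale[OF f])
  finally have h3: "B y (br x (D (tens m f))) = eps (r + p + q) d * (F1 - eps r p * F2)" .
  show "B y (D (tens (rho x m) (f \<circ> be) + sT (eps p q) (tens (be m) (rhot x f)))) = B y (br x (D (tens m f)))"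
    unfolding h3 D_add D_scale B_add2 B_scale2 h1 h2
    using eps_id1[of p q r d] by (simp add: algebra_simps)
qed


lemma lhs_form:
  assumes m1: "m1 \<in> MV a1" and f1: "f1 \<in> DD b1" and m2: "m2 \<in> MV a2" and f2: "f2 \<in> DD b2"
    and m3: "m3 \<in> MV a3" and f3: "f3 \<in> DD b3"
  shows "brT (tau (tens m1 f1)) (brT (tens m2 f2) (tens m3 f3)) =
    tens (rho (al (D (tens m1 f1))) (rho (D (tens m2 f2)) m3)) f3
    + sT (eps (a1 + b1) (a2 + b2 + a3)) (tens (rho (al (D (tens m2 f2))) (be m3)) (rhot (D (tens m1 f1)) f3 \<circ> be))
    + sT (eps (a2 + b2) a3) (tens (rho (al (D (tens m1 f1))) (be m3)) (rhot (D (tens m2 f2)) f3 \<circ> be)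
        + sT (eps (a1 + b1) a3) (tens m3 (rhot (al (D (tens m1 f1))) (rhot (D (tens m2 f2)) f3))))"
proof -
  define X where "X = D (tens m1 f1)"
  define Y where "Y = D (tens m2 f2)"
  have Y: "Y \<in> G (a2 + b2)" unfolding Y_def using D_deg[OF m2 f2] .
  have tu: "tau (tens m1 f1) = tens (be m1) (f1 \<circ> be)" using tau_pure[OF f1] .
  have DX: "D (tens (be m1) (f1 \<circ> be)) = al X" unfolding X_def using Dtau[OF m1 f1] .
  have vw: "brT (tens m2 f2) (tens m3 f3) = tens (rho Y m3) (f3 \<circ> be) + sT (eps (a2 + b2) a3) (tens (be m3) (rhot Y f3))"
    unfolding Y_def using brT_pure[OF m2 f2 m3 f3] .
  have A: "brT (tens (be m1) (f1 \<circ> be)) (tens (rho Y m3) (f3 \<circ> be)) =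
     tens (rho (al X) (rho Y m3)) f3 + sT (eps (a1 + b1) (a2 + b2 + a3)) (tens (rho (al Y) (be m3)) (rhot X f3 \<circ> be))"
    using brT_pure[OF be_deg[OF m1] bed_deg[OF f1] rho_deg[OF Y m3] bed_deg[OF f3]]
    unfolding DX bebe be_rho rhot_be[OF dd_GD[OF f3]] .
  have Bt: "brT (tens (be m1) (f1 \<circ> be)) (tens (be m3) (rhot Y f3)) =
     tens (rho (al X) (be m3)) (rhot Y f3 \<circ> be) + sT (eps (a1 + b1) a3) (tens m3 (rhot (al X) (rhot Y f3)))"
    using brT_pure[OF be_deg[OF m1] bed_deg[OF f1] be_deg[OF m3] rhot_deg[OF Y f3]] be_inv
    unfolding DX by simp
  show ?thesis
    unfolding tu vw brT_add2 brT_scale2 A Bt X_def[symmetric] Y_def[symmetric] ..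
qed

lemma mid_form:
  assumes m1: "m1 \<in> MV a1" and f1: "f1 \<in> DD b1" and m2: "m2 \<in> MV a2" and f2: "f2 \<in> DD b2"
    and m3: "m3 \<in> MV a3" and f3: "f3 \<in> DD b3"
  shows "brT (brT (tens m1 f1) (tens m2 f2)) (tau (tens m3 f3)) =
    tens (rho (br (D (tens m1 f1)) (D (tens m2 f2))) (be m3)) f3
    + sT (eps (a1 + b1 + (a2 + b2)) a3) (tens m3 (rhot (br (D (tens m1 f1)) (D (tens m2 f2))) (f3 \<circ> be)))"
proof -
  define X where "X = D (tens m1 f1)"
  have X: "X \<in> G (a1 + b1)" unfolding X_def using D_deg[OF m1 f1] .
  define k where "k = eps (a1 + b1) a2"
  define E where "E = eps (a1 + b1 + (a2 + b2)) a3"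
  define p1 where "p1 = tens (rho X m2) (f2 \<circ> be)"
  define p2 where "p2 = tens (be m2) (rhot X f2)"
  define g where "g = f3 \<circ> be"
  have g: "g \<in> GD" unfolding g_def using dd_GD[OF bed_deg[OF f3]] .
  have f3': "f3 \<in> GD" using dd_GD[OF f3] .
  have uv: "brT (tens m1 f1) (tens m2 f2) = p1 + sT k p2"
    unfolding p1_def p2_def k_def X_def using brT_pure[OF m1 f1 m2 f2] .
  have Z: "br X (D (tens m2 f2)) = D p1 + s k (D p2)"
    using Dsig[OF X m2 f2] unfolding p1_def p2_def k_def by (simp add: D_add D_scale)
  have tw: "tau (tens m3 f3) = tens (be m3) g" unfolding g_def using tau_pure[OF f3] .
  have e1: "a1 + b1 + a2 + b2 = a1 + b1 + (a2 + b2)" "a2 + (a1 + b1 + b2) = a1 + b1 + (a2 + b2)"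
    by (simp_all add: ac_simps)
  have b1': "brT p1 (tens (be m3) g) = tens (rho (D p1) (be m3)) f3 + sT E (tens m3 (rhot (D p1) g))"
    using brT_pure[OF rho_deg[OF X m2] bed_deg[OF f2] be_deg[OF m3] bed_deg[OF f3]] be_inv e1
    unfolding p1_def[symmetric] E_def g_def bebe by simp
  have b2': "brT p2 (tens (be m3) g) = tens (rho (D p2) (be m3)) f3 + sT E (tens m3 (rhot (D p2) g))"
    using brT_pure[OF be_deg[OF m2] rhot_deg[OF X f2] be_deg[OF m3] bed_deg[OF f3]] be_inv e1
    unfolding p2_def[symmetric] E_def g_def bebe by simp
  have r1: "tens (rho (D p1 + s k (D p2)) (be m3)) f3 = sT k (tens (rho (D p2) (be m3)) f3) + tens (rho (D p1) (be m3)) f3"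
    using rho_linx[of k "D p2" "D p1" "be m3"] by (simp add: add.commute tens_add1[OF f3'] tens_scale1[OF f3'])
  have r2: "tens m3 (rhot (D p1 + s k (D p2)) g) = sT k (tens m3 (rhot (D p2) g)) + tens m3 (rhot (D p1) g)"
    using rhot_linx'[OF g, of k "D p2" "D p1"]
    by (simp add: add.commute tens_add2[OF rhot_GD[OF g] GD_scale[OF rhot_GD[OF g]]] tens_scale2[OF rhot_GD[OF g]])
  show ?thesis
    unfolding uv tw brT_add1 brT_scale1 b1' b2' X_def[symmetric] Z r1 r2 E_def[symmetric] g_def[symmetric]
    by (simp add: T.scale_right_distrib algebra_simps)
qed


lemma alg:
  assumes "LL = T1 + sT (e * k3) C1 + sT (e * k6) (C2 + sT k3 T3)"
    and "TH = T2 + sT k6 C2 + sT k3 (C1 + sT (e * k6) T4)"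
    and "MID = T1 - sT e T2 + sT (e * k6 * k3) (T3 - sT e T4)"
  shows "LL = MID + sT e TH"
  unfolding assms
  by (simp add: T.scale_right_distrib T.scale_right_diff_distrib algebra_simps)

lemma pure:
  assumes m1: "m1 \<in> MV a1" and f1: "f1 \<in> DD b1" and m2: "m2 \<in> MV a2" and f2: "f2 \<in> DD b2"
    and m3: "m3 \<in> MV a3" and f3: "f3 \<in> DD b3"
  shows "brT (tau (tens m1 f1)) (brT (tens m2 f2) (tens m3 f3)) =
     brT (brT (tens m1 f1) (tens m2 f2)) (tau (tens m3 f3))
     + sT (eps (a1 + b1) (a2 + b2)) (brT (tau (tens m2 f2)) (brT (tens m1 f1) (tens m3 f3)))"
proof -
  define X where "X = D (tens m1 f1)"
  define Y where "Y = D (tens m2 f2)"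
  define P where "P = a1 + b1"
  define Q where "Q = a2 + b2"
  have X: "X \<in> G P" unfolding X_def P_def using D_deg[OF m1 f1] .
  have Y: "Y \<in> G Q" unfolding Y_def Q_def using D_deg[OF m2 f2] .
  have f3': "f3 \<in> GD" using dd_GD[OF f3] .
  define e where "e = eps P Q"
  define k3 where "k3 = eps P a3"
  define k6 where "k6 = eps Q (P + a3)"
  have i1: "eps P (Q + a3) = e * k3" unfolding e_def k3_def by (simp add: eps_add2)
  have i2: "eps Q a3 = e * k6" unfolding e_def k6_def
    using eps_inv[of P Q] by (simp add: eps_add2 mult.assoc[symmetric])
  have i3: "eps (P + Q) a3 = e * k6 * k3" unfolding i2[symmetric] k3_def by (simp add: eps_add1 ac_simps)
  have L1: "brT (tau (tens m1 f1)) (brT (tens m2 f2) (tens m3 f3)) =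
    tens (rho (al X) (rho Y m3)) f3 + sT (e * k3) (tens (rho (al Y) (be m3)) (rhot X f3 \<circ> be))
    + sT (e * k6) (tens (rho (al X) (be m3)) (rhot Y f3 \<circ> be) + sT k3 (tens m3 (rhot (al X) (rhot Y f3))))"
    using lhs_form[OF m1 f1 m2 f2 m3 f3] unfolding X_def[symmetric] Y_def[symmetric] P_def[symmetric] Q_def[symmetric]
      i1 i2 k3_def .
  have L2: "brT (tau (tens m2 f2)) (brT (tens m1 f1) (tens m3 f3)) =
    tens (rho (al Y) (rho X m3)) f3 + sT k6 (tens (rho (al X) (be m3)) (rhot Y f3 \<circ> be))
    + sT k3 (tens (rho (al Y) (be m3)) (rhot X f3 \<circ> be) + sT (e * k6) (tens m3 (rhot (al Y) (rhot X f3))))"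
    using lhs_form[OF m2 f2 m1 f1 m3 f3] unfolding X_def[symmetric] Y_def[symmetric] P_def[symmetric] Q_def[symmetric]
      i2 k3_def k6_def .
  have L3: "brT (brT (tens m1 f1) (tens m2 f2)) (tau (tens m3 f3)) =
    tens (rho (al X) (rho Y m3)) f3 - sT e (tens (rho (al Y) (rho X m3)) f3)
    + sT (e * k6 * k3) (tens m3 (rhot (al X) (rhot Y f3)) - sT e (tens m3 (rhot (al Y) (rhot X f3))))"
    using mid_form[OF m1 f1 m2 f2 m3 f3] unfolding X_def[symmetric] Y_def[symmetric] P_def[symmetric] Q_def[symmetric]
      i3 rep_id[OF X Y] rhot_rep_id[OF X Y f3'] e_def[symmetric]
      tens_diff1[OF f3'] tens_scale1[OF f3']
      tens_diff2[OF rhot_GD[OF rhot_GD[OF f3']] rhot_GD[OF rhot_GD[OF f3']]] .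
  show ?thesis unfolding P_def[symmetric] Q_def[symmetric] e_def[symmetric]
    by (rule alg[OF L1 L2 L3])
qed


definition H where "H u v w e \<longleftrightarrow> brT (tau u) (brT v w) = brT (brT u v) (tau w) + sT e (brT (tau v) (brT u w))"

lemma H_u: "H u v w e \<Longrightarrow> H u' v w e \<Longrightarrow> H (sT c u + u') v w e"
  unfolding H_def
  by (simp add: tau_add tau_scale brT_add1 brT_scale1 brT_add2 brT_scale2 T.scale_right_distrib algebra_simps)
lemma H_v: "H u v w e \<Longrightarrow> H u v' w e \<Longrightarrow> H u (sT c v + v') w e"
  unfolding H_def
  by (simp add: tau_add tau_scale brT_add1 brT_scale1 brT_add2 brT_scale2 T.scale_right_distrib algebra_simps)
lemma H_w: "H u v w e \<Longrightarrow> H u v w' e \<Longrightarrow> H u v (sT c w + w') e"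
  unfolding H_def
  by (simp add: tau_add tau_scale brT_add1 brT_scale1 brT_add2 brT_scale2 T.scale_right_distrib algebra_simps)
lemma H_0u: "H 0 v w e" unfolding H_def by (simp add: tau_zero brT_zero1 brT_zero2)
lemma H_0v: "H u 0 w e" unfolding H_def by (simp add: tau_zero brT_zero1 brT_zero2)
lemma H_0w: "H u v 0 e" unfolding H_def by (simp add: tau_zero brT_zero1 brT_zero2)

abbreviation "TD \<equiv> tensor_deg sM MV sT tens"

lemma ext_w:
  assumes m1: "m1 \<in> MV a1" and f1: "f1 \<in> DD b1" and m2: "m2 \<in> MV a2" and f2: "f2 \<in> DD b2"
    and w: "w \<in> TD c"
  shows "H (tens m1 f1) (tens m2 f2) w (eps (a1 + b1) (a2 + b2))"
  using w unfolding tensor_deg_def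
proof (induct rule: T.span_induct_alt)
  case base show ?case by (rule H_0w)
next
  case (step k x y)
  then obtain m3 f3 a3 b3 where x: "x = tens m3 f3" "m3 \<in> MV a3" "f3 \<in> DD b3" by blast
  have "H (tens m1 f1) (tens m2 f2) x (eps (a1 + b1) (a2 + b2))"
    unfolding H_def x(1) using pure[OF m1 f1 m2 f2 x(2,3)] .
  thus ?case using step(2) by (rule H_w)
qed

lemma ext_v:
  assumes m1: "m1 \<in> MV a1" and f1: "f1 \<in> DD b1" and v: "v \<in> TD b" and w: "w \<in> TD c"
  shows "H (tens m1 f1) v w (eps (a1 + b1) b)"
  using v unfolding tensor_deg_def
proof (induct rule: T.span_induct_alt)
  case base show ?case by (rule H_0v)
next
  case (step k x y)
  then obtain m2 f2 a2 b2 where x: "x = tens m2 f2" "m2 \<in> MV a2" "f2 \<in> DD b2" "a2 + b2 = b" by blast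
  have "H (tens m1 f1) x w (eps (a1 + b1) b)"
    using ext_w[OF m1 f1 x(2,3) w] x(1,4) by simp
  thus ?case using step(2) by (rule H_v)
qed

lemma ext_u:
  assumes u: "u \<in> TD a" and v: "v \<in> TD b" and w: "w \<in> TD c"
  shows "H u v w (eps a b)"
  using u unfolding tensor_deg_def
proof (induct rule: T.span_induct_alt)
  case base show ?case by (rule H_0u)
next
  case (step k x y)
  then obtain m1 f1 a1 b1 where x: "x = tens m1 f1" "m1 \<in> MV a1" "f1 \<in> DD b1" "a1 + b1 = a" by blast
  have "H x v w (eps a b)"
    using ext_v[OF x(2,3) v w] x(1,4) by simp
  thus ?case using step(2) by (rule H_u)
qed

lemma main:
  "\<forall>a b c. \<forall>u\<in>tensor_deg sM MV sT tens a. \<forall>v\<in>tensor_deg sM MV sT tens b.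
           \<forall>w\<in>tensor_deg sM MV sT tens c.
             brT (tau u) (brT v w) = brT (brT u v) (tau w) + sT (eps a b) (brT (tau v) (brT u w))"
  using ext_u unfolding H_def by blast

end

theorem mainTheorem14:
  fixes s :: "'k::field_char_0 \<Rightarrow> 'g::ab_group_add \<Rightarrow> 'g"
    and G :: "'c::ab_group_add \<Rightarrow> 'g set"
    and br :: "'g \<Rightarrow> 'g \<Rightarrow> 'g" and al :: "'g \<Rightarrow> 'g"
    and eps :: "'c \<Rightarrow> 'c \<Rightarrow> 'k" and B :: "'g \<Rightarrow> 'g \<Rightarrow> 'k"
    and sM :: "'k \<Rightarrow> 'm::ab_group_add \<Rightarrow> 'm" and MV :: "'c \<Rightarrow> 'm set"
    and rho :: "'g \<Rightarrow> 'm \<Rightarrow> 'm" and be :: "'m \<Rightarrow> 'm"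
    and rhot :: "'g \<Rightarrow> ('m \<Rightarrow> 'k) \<Rightarrow> ('m \<Rightarrow> 'k)"
    and sT :: "'k \<Rightarrow> 't::ab_group_add \<Rightarrow> 't" and tens :: "'m \<Rightarrow> ('m \<Rightarrow> 'k) \<Rightarrow> 't"
    and D :: "'t \<Rightarrow> 'g" and brT :: "'t \<Rightarrow> 't \<Rightarrow> 't" and tau :: "'t \<Rightarrow> 't"
  assumes lie: "color_hom_lie s G br al eps"
    and mult: "multiplicative br al"
    and quad: "quadratic_form s G br al eps B"
    and Mgr: "graded_on sM UNIV MV"
    and rep: "color_hom_rep s G br al eps sM UNIV MV rho be"
    and faithful: "inj rho"
    and al_inv: "\<forall>x. al (al x) = x"
    and be_inv: "\<forall>m. be (be m) = m"
    and rhot_hom: "\<forall>a d. \<forall>x\<in>G a. \<forall>f\<in>dual_deg sM MV d.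
                     rhot x f = dscale (- eps a d) (f \<circ> rho x)"
    and rhot_lin: "\<forall>x. lin_on dscale (gdual sM MV) dscale (gdual sM MV) (rhot x)"
    and rhot_linx: "\<forall>c x y. \<forall>f\<in>gdual sM MV. rhot (s c x + y) f = dscale c (rhot x f) + rhot y f"
    and rhot_rep: "color_hom_rep s G br al eps dscale (gdual sM MV) (dual_deg sM MV) rhot (\<lambda>f. f \<circ> be)"
    and tensor: "is_tensor sM UNIV dscale (gdual sM MV) sT tens"
    and D_lin: "Vector_Spaces.linear sT s D"
    and D_even: "\<forall>c. \<forall>u\<in>tensor_deg sM MV sT tens c. D u \<in> G c"
    and D_def: "\<forall>a b d. \<forall>x\<in>G a. \<forall>m\<in>MV b. \<forall>f\<in>dual_deg sM MV d.
                  B x (D (tens m f)) = eps (a + b) d * f (rho (al x) m)"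
    and brT_lin1: "\<forall>v. Vector_Spaces.linear sT sT (\<lambda>u. brT u v)"
    and brT_lin2: "\<forall>u. Vector_Spaces.linear sT sT (brT u)"
    and brT_def: "\<forall>a b a' b'. \<forall>m\<in>MV a. \<forall>f\<in>dual_deg sM MV b. \<forall>m'\<in>MV a'. \<forall>f'\<in>dual_deg sM MV b'.
                   brT (tens m f) (tens m' f') =
                     tens (rho (D (tens m f)) m') (f' \<circ> be)
                     + sT (eps (a + b) a') (tens (be m') (rhot (D (tens m f)) f'))"
    and tau_lin: "Vector_Spaces.linear sT sT tau"
    and tau_def: "\<forall>m. \<forall>f\<in>gdual sM MV. tau (tens m f) = tens (be m) (f \<circ> be)"
  shows "\<forall>a b c. \<forall>u\<in>tensor_deg sM MV sT tens a. \<forall>v\<in>tensor_deg sM MV sT tens b.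
           \<forall>w\<in>tensor_deg sM MV sT tens c.
             brT (tau u) (brT v w) = brT (brT u v) (tau w) + sT (eps a b) (brT (tau v) (brT u w))"
  by (rule L.main[OF L.intro[OF lie mult quad Mgr rep faithful al_inv be_inv rhot_hom rhot_lin rhot_linx
      rhot_rep tensor D_lin D_even D_def brT_lin1 brT_lin2 brT_def tau_lin tau_def]])

end
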